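(* Let $\mathcal{A}$ be a normal cyclotomic $S$-ring with trivial radical over a finite cyclic group $G$, and let $K\le\mathrm{Aut}(G)$ be such that $\mathcal{A}=\mathrm{Cyc}(K,G)$. Then $\mathrm{Aut}(\mathcal{A})=G_{right}\rtimes K$.
   Context: An $S$-ring over $G$ is a subring $\mathcal{A}\subseteq\mathbb{Z}G$ spanned by the elements $\underline{X}=\sum_{x\in X}x$ for $X$ in a partition $\mathcal{S}(\mathcal{A})$ of $G$ (basic sets) with $\{e\}\in\mathcal{S}(\mathcal{A})$ and closed under $X\mapsto X^{-1}$. For $K\le\mathrm{Aut}(G)$, $\mathrm{Cyc}(K,G)$ is the $S$-ring whose basic sets are the $K$-orbits; $\mathcal{A}$ is cyclotomic if it equals $\mathrm{Cyc}(K,G)$ for some $K$. For $X\in\mathcal{S}(\mathcal{A})$ let $r(X)=\{(g,xg):g\in G,x\in X\}$; $\mathrm{Aut}(\mathcal{A})$ is the group of permutations $f$ of $G$ with $r(X)^f=r(X)$ for all basic sets $X$. $G_{right}$ is the group of right multiplications $g\mapsto gh$, $h\in G$. $\mathcal{A}$ is normal if $G_{right}$ is normal in $\mathrm{Aut}(\mathcal{A})$. For $X\subseteq G$, $\mathrm{rad}(X)=\{g\in G:gX=Xg=X\}$; the radical of $\mathcal{A}$ (over cyclic $G$) is $\mathrm{rad}(X)$ for a basic set $X$ containing a generator of $G$, and it is trivial if it equals $\{e\}$. *)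

theory Defs
  imports "HOL-Algebra.Algebra"
begin

definition is_generator :: "('a, 'b) monoid_scheme \<Rightarrow> 'a \<Rightarrow> bool" where
  "is_generator G g \<longleftrightarrow> g \<in> carrier G \<and> generate G {g} = carrier G"

definition cyclic_grp :: "('a, 'b) monoid_scheme \<Rightarrow> bool" where
  "cyclic_grp G \<longleftrightarrow> group G \<and> (\<exists>g. is_generator G g)"

text \<open>An S-ring over G, represented by its set S of basic sets.  The Z-span of
the elements sum(T), T in S, is a subring of ZG iff it contains 1 (i.e. {e} in S)
and the product sum(T)*sum(Y) lies in the span, i.e. for every Z in S the number of
pairs (x,y) in T x Y with x y = z does not depend on z in Z.\<close>
definition is_S_ring :: "('a, 'b) monoid_scheme \<Rightarrow> 'a set set \<Rightarrow> bool" where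
  "is_S_ring G S \<longleftrightarrow>
     (\<forall>T\<in>S. T \<noteq> {} \<and> T \<subseteq> carrier G) \<and>
     (\<forall>T\<in>S. \<forall>Y\<in>S. T \<noteq> Y \<longrightarrow> T \<inter> Y = {}) \<and>
     \<Union>S = carrier G \<and>
     {\<one>\<^bsub>G\<^esub>} \<in> S \<and>
     (\<forall>T\<in>S. (\<lambda>x. inv\<^bsub>G\<^esub> x) ` T \<in> S) \<and>
     (\<forall>T\<in>S. \<forall>Y\<in>S. \<forall>Z\<in>S. \<forall>z\<in>Z. \<forall>z'\<in>Z.
        card {(x, y). x \<in> T \<and> y \<in> Y \<and> x \<otimes>\<^bsub>G\<^esub> y = z}
      = card {(x, y). x \<in> T \<and> y \<in> Y \<and> x \<otimes>\<^bsub>G\<^esub> y = z'})"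

definition Cyc :: "('a \<Rightarrow> 'a) set \<Rightarrow> ('a, 'b) monoid_scheme \<Rightarrow> 'a set set" where
  "Cyc K G = {{\<sigma> x | \<sigma>. \<sigma> \<in> K} | x. x \<in> carrier G}"

definition rel_of :: "('a, 'b) monoid_scheme \<Rightarrow> 'a set \<Rightarrow> ('a \<times> 'a) set" where
  "rel_of G T = {(g, x \<otimes>\<^bsub>G\<^esub> g) | g x. g \<in> carrier G \<and> x \<in> T}"

definition AutS :: "('a, 'b) monoid_scheme \<Rightarrow> 'a set set \<Rightarrow> ('a \<Rightarrow> 'a) set" where
  "AutS G S = {f \<in> Bij (carrier G).
      \<forall>T\<in>S. (\<lambda>(a, b). (f a, f b)) ` rel_of G T = rel_of G T}"

definition AutS_group :: "('a, 'b) monoid_scheme \<Rightarrow> 'a set set \<Rightarrow> ('a \<Rightarrow> 'a) monoid" where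
  "AutS_group G S = (BijGroup (carrier G)) \<lparr>carrier := AutS G S\<rparr>"

definition G_right :: "('a, 'b) monoid_scheme \<Rightarrow> ('a \<Rightarrow> 'a) set" where
  "G_right G = {(\<lambda>g\<in>carrier G. g \<otimes>\<^bsub>G\<^esub> h) | h. h \<in> carrier G}"

definition is_normal_S_ring :: "('a, 'b) monoid_scheme \<Rightarrow> 'a set set \<Rightarrow> bool" where
  "is_normal_S_ring G S \<longleftrightarrow> G_right G \<lhd> AutS_group G S"

definition rad :: "('a, 'b) monoid_scheme \<Rightarrow> 'a set \<Rightarrow> 'a set" where
  "rad G T = {g \<in> carrier G. g <#\<^bsub>G\<^esub> T = T \<and> T #>\<^bsub>G\<^esub> g = T}"

definition trivial_radical :: "('a, 'b) monoid_scheme \<Rightarrow> 'a set set \<Rightarrow> bool" where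
  "trivial_radical G S \<longleftrightarrow>
     (\<exists>T\<in>S. (\<exists>g\<in>T. is_generator G g) \<and> rad G T = {\<one>\<^bsub>G\<^esub>})"

definition is_semidirect :: "('c, 'd) monoid_scheme \<Rightarrow> 'c set \<Rightarrow> 'c set \<Rightarrow> bool" where
  "is_semidirect H N K \<longleftrightarrow>
     N \<lhd> H \<and> subgroup K H \<and> N \<inter> K = {\<one>\<^bsub>H\<^esub>} \<and> N <#>\<^bsub>H\<^esub> K = carrier H"

end

theory Submission
  imports Defs
begin

lemma hom_agree_on_generate:
  assumes grp: "group G" and k: "k \<in> hom G G" and f: "f \<in> hom G G"
    and gG: "g \<in> carrier G" and eq: "k g = f g"
  shows "x \<in> generate G {g} \<Longrightarrow> k x = f x"
proof (induction x rule: generate.induct)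
  have hk: "group_hom G G k" using grp k by (simp add: group_hom_def group_hom_axioms_def)
  have hf: "group_hom G G f" using grp f by (simp add: group_hom_def group_hom_axioms_def)
  {
  case one
  then show ?case using group_hom.hom_one[OF hk] group_hom.hom_one[OF hf] by simp
next
  case (inv h)
  then show ?case using group_hom.hom_inv[OF hk] group_hom.hom_inv[OF hf] gG eq by simp
  }
next
  case (incl h)
  then show ?case using eq by simp
next
  case (eng h1 h2)
  have "h1 \<in> carrier G" "h2 \<in> carrier G"
    using eng.hyps gG grp by (meson empty_subsetI group.generate_incl insert_subset subsetD)+
  then show ?case using eng k f by (simp add: hom_mult)
qed

theorem lemma6p5:
  fixes G :: "('a, 'b) monoid_scheme" and K :: "('a \<Rightarrow> 'a) set" and S :: "'a set set"
  assumes "cyclic_grp G" and "finite (carrier G)"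
    and "subgroup K (AutoGroup G)"
    and "S = Cyc K G"
    and "is_S_ring G S"
    and "is_normal_S_ring G S"
    and "trivial_radical G S"
  shows "AutS G S = G_right G <#>\<^bsub>BijGroup (carrier G)\<^esub> K
    \<and> is_semidirect (AutS_group G S) (G_right G) K"
proof -
  let ?C = "carrier G"
  let ?A = "AutS_group G S"
  let ?B = "BijGroup ?C"
  let ?N = "G_right G"
  define r where "r = (\<lambda>h. (\<lambda>x\<in>?C. x \<otimes>\<^bsub>G\<^esub> h))"
  have grp: "group G" using assms(1) by (simp add: cyclic_grp_def)
  interpret G: group G by (rule grp)
  obtain g where gG: "g \<in> ?C" and gen: "generate G {g} = ?C"
    using assms(1) by (auto simp: cyclic_grp_def is_generator_def)
  have Nr: "?N = {r h | h. h \<in> ?C}" by (simp add: G_right_def r_def)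
  have nrm: "?N \<lhd> ?A" using assms(6) by (simp add: is_normal_S_ring_def)
  have cA: "carrier ?A = AutS G S" by (simp add: AutS_group_def)
  have mA: "monoid.mult ?A = monoid.mult ?B" by (simp add: AutS_group_def)
  have oA: "monoid.one ?A = monoid.one ?B" by (simp add: AutS_group_def)
  have grpA: "group ?A" using nrm normal.axioms(2) by blast
  have subN: "subgroup ?N ?A" using nrm normal.axioms(1) by blast
  have AB: "AutS G S \<subseteq> Bij ?C" by (auto simp: AutS_def)
  have multB: "\<And>f k. f \<in> Bij ?C \<Longrightarrow> k \<in> Bij ?C \<Longrightarrow> f \<otimes>\<^bsub>?B\<^esub> k = compose ?C f k"
    by (simp add: BijGroup_def)
  have oneB: "\<one>\<^bsub>?B\<^esub> = (\<lambda>x\<in>?C. x)" by (simp add: BijGroup_def)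
  have closeA: "\<And>f k. f \<in> AutS G S \<Longrightarrow> k \<in> AutS G S \<Longrightarrow> compose ?C f k \<in> AutS G S"
  proof -
    fix f k assume f: "f \<in> AutS G S" and k: "k \<in> AutS G S"
    have "f \<otimes>\<^bsub>?A\<^esub> k \<in> carrier ?A" using monoid.m_closed[OF group.is_monoid[OF grpA]] f k cA by simp
    moreover have "f \<otimes>\<^bsub>?A\<^esub> k = compose ?C f k" using multB f k AB mA by (metis subsetD)
    ultimately show "compose ?C f k \<in> AutS G S" using cA by simp
  qed
  have NA: "?N \<subseteq> AutS G S" using subgroup.subset[OF subN] cA by simp
  have rA: "\<And>h. h \<in> ?C \<Longrightarrow> r h \<in> AutS G S" using NA Nr by blast
  have grpAu: "group (AutoGroup G)" using group.AutoGroup[OF grp] .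
  have cAu: "carrier (AutoGroup G) = auto G" by (simp add: AutoGroup_def)
  have mAu: "monoid.mult (AutoGroup G) = monoid.mult ?B" by (simp add: AutoGroup_def)
  have oAu: "monoid.one (AutoGroup G) = monoid.one ?B" by (simp add: AutoGroup_def)
  have Kauto: "K \<subseteq> auto G" using subgroup.subset[OF assms(3)] cAu by simp
  have KB: "K \<subseteq> Bij ?C" using Kauto by (auto simp: auto_def)
  have Khom: "K \<subseteq> hom G G" using Kauto by (auto simp: auto_def)
  have Kcomp: "\<And>a b. a \<in> K \<Longrightarrow> b \<in> K \<Longrightarrow> compose ?C a b \<in> K"
    using subgroup.m_closed[OF assms(3)] mAu multB KB by (metis subsetD)
  have Kone: "(\<lambda>x\<in>?C. x) \<in> K"
    using subgroup.one_closed[OF assms(3)] oAu oneB by simp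
  have Kinv: "\<And>k. k \<in> K \<Longrightarrow> \<exists>ki\<in>K. \<forall>x\<in>?C. k (ki x) = x"
  proof -
    fix k assume k: "k \<in> K"
    define ki where "ki = inv\<^bsub>AutoGroup G\<^esub> k"
    have ki: "ki \<in> K" using subgroup.m_inv_closed[OF assms(3) k] ki_def by simp
    have "k \<otimes>\<^bsub>AutoGroup G\<^esub> ki = \<one>\<^bsub>AutoGroup G\<^esub>"
      using group.r_inv[OF grpAu] k Kauto cAu ki_def by auto
    then have "compose ?C k ki = (\<lambda>x\<in>?C. x)" using mAu oAu oneB multB[of k ki] k ki KB by (metis subsetD)
    then have "\<forall>x\<in>?C. k (ki x) = x" by (metis compose_eq restrict_apply')
    then show "\<exists>ki\<in>K. \<forall>x\<in>?C. k (ki x) = x" using ki by blast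
  qed
  have Kfun: "\<And>k x. k \<in> K \<Longrightarrow> x \<in> ?C \<Longrightarrow> k x \<in> ?C"
    using KB Bij_imp_funcset by (metis funcset_mem subsetD)
  have KA: "K \<subseteq> AutS G S"
  proof
    fix k assume k: "k \<in> K"
    have "\<forall>T\<in>S. (\<lambda>(a, b). (k a, k b)) ` rel_of G T = rel_of G T"
    proof
      fix T assume "T \<in> S"
      then obtain x where x: "x \<in> ?C" and T: "T = {\<sigma> x | \<sigma>. \<sigma> \<in> K}"
        using assms(4) by (auto simp: Cyc_def)
      show "(\<lambda>(a, b). (k a, k b)) ` rel_of G T = rel_of G T"
      proof
        show "(\<lambda>(a, b). (k a, k b)) ` rel_of G T \<subseteq> rel_of G T"
        proof
          fix p assume "p \<in> (\<lambda>(a, b). (k a, k b)) ` rel_of G T"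
          then obtain g0 \<sigma> where g0: "g0 \<in> ?C" and s: "\<sigma> \<in> K"
            and p: "p = (k g0, k (\<sigma> x \<otimes>\<^bsub>G\<^esub> g0))"
            by (auto simp: rel_of_def T)
          have sx: "\<sigma> x \<in> ?C" using Kfun s x by blast
          have "k (\<sigma> x \<otimes>\<^bsub>G\<^esub> g0) = k (\<sigma> x) \<otimes>\<^bsub>G\<^esub> k g0"
            using Khom k sx g0 by (auto simp: hom_def)
          moreover have "k (\<sigma> x) = compose ?C k \<sigma> x" using x by (simp add: compose_eq)
          moreover have "compose ?C k \<sigma> \<in> K" using Kcomp k s by blast
          ultimately show "p \<in> rel_of G T" using p Kfun[OF k g0]
            unfolding rel_of_def T by blast
        qed
      next
        show "rel_of G T \<subseteq> (\<lambda>(a, b). (k a, k b)) ` rel_of G T"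
        proof
          fix p assume "p \<in> rel_of G T"
          then obtain g0 \<sigma> where g0: "g0 \<in> ?C" and s: "\<sigma> \<in> K"
            and p: "p = (g0, \<sigma> x \<otimes>\<^bsub>G\<^esub> g0)"
            by (auto simp: rel_of_def T)
          obtain ki where ki: "ki \<in> K" and kki: "\<forall>x\<in>?C. k (ki x) = x" using Kinv k by blast
          have sx: "\<sigma> x \<in> ?C" using Kfun s x by blast
          have kig: "ki g0 \<in> ?C" using Kfun ki g0 by blast
          have kisx: "ki (\<sigma> x) \<in> ?C" using Kfun ki sx by blast
          have "ki (\<sigma> x) = compose ?C ki \<sigma> x" using x by (simp add: compose_eq)
          moreover have "compose ?C ki \<sigma> \<in> K" using Kcomp ki s by blast
          ultimately have mem: "ki (\<sigma> x) \<in> T" unfolding T by blast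
          have "k (ki (\<sigma> x) \<otimes>\<^bsub>G\<^esub> ki g0) = k (ki (\<sigma> x)) \<otimes>\<^bsub>G\<^esub> k (ki g0)"
            using Khom k kig kisx by (auto simp: hom_def)
          also have "\<dots> = \<sigma> x \<otimes>\<^bsub>G\<^esub> g0" using kki sx g0 by simp
          finally have "p = (\<lambda>(a, b). (k a, k b)) (ki g0, ki (\<sigma> x) \<otimes>\<^bsub>G\<^esub> ki g0)"
            using p kki g0 by simp
          moreover have "(ki g0, ki (\<sigma> x) \<otimes>\<^bsub>G\<^esub> ki g0) \<in> rel_of G T"
            unfolding rel_of_def using kig mem by blast
          ultimately show "p \<in> (\<lambda>(a, b). (k a, k b)) ` rel_of G T" by blast
        qed
      qed
    qed
    then show "k \<in> AutS G S" using KB k by (auto simp: AutS_def)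
  qed
  have main: "\<And>f. f \<in> AutS G S \<Longrightarrow> \<exists>h\<in>?C. \<exists>k\<in>K. f = compose ?C (r h) k"
  proof -
    fix f assume fA: "f \<in> AutS G S"
    have fB: "f \<in> Bij ?C" using fA AB by blast
    have ffun: "\<And>x. x \<in> ?C \<Longrightarrow> f x \<in> ?C" using fB Bij_imp_funcset by (metis funcset_mem)
    have oneG: "\<one>\<^bsub>G\<^esub> \<in> ?C" using grp by (simp add: group.is_monoid monoid.one_closed)
    define h where "h = f \<one>\<^bsub>G\<^esub>"
    have h: "h \<in> ?C" using ffun oneG h_def by simp
    define hi where "hi = inv\<^bsub>G\<^esub> h"
    have hi: "hi \<in> ?C" using h grp hi_def by simp
    define fp where "fp = compose ?C (r hi) f"
    have fpA: "fp \<in> AutS G S" using closeA[OF rA[OF hi] fA] fp_def by simp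
    have fpB: "fp \<in> Bij ?C" using fpA AB by blast
    have fpx: "\<And>x. x \<in> ?C \<Longrightarrow> fp x = f x \<otimes>\<^bsub>G\<^esub> hi"
      using ffun by (simp add: fp_def compose_eq r_def)
    have fpfun: "\<And>x. x \<in> ?C \<Longrightarrow> fp x \<in> ?C" using fpx ffun hi grp by simp
    have fp1: "fp \<one>\<^bsub>G\<^esub> = \<one>\<^bsub>G\<^esub>" using fpx[OF oneG] h_def hi_def h grp by simp
    have fphom: "\<And>x a. x \<in> ?C \<Longrightarrow> a \<in> ?C \<Longrightarrow> fp (x \<otimes>\<^bsub>G\<^esub> a) = fp x \<otimes>\<^bsub>G\<^esub> fp a"
    proof -
      fix x a assume x: "x \<in> ?C" and a: "a \<in> ?C"
      have raN: "r a \<in> ?N" using Nr a by blast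
      have "fp \<otimes>\<^bsub>?A\<^esub> r a \<in> fp <#\<^bsub>?A\<^esub> ?N" unfolding l_coset_def using raN by blast
      also have "fp <#\<^bsub>?A\<^esub> ?N = ?N #>\<^bsub>?A\<^esub> fp"
        using normal.coset_eq[OF nrm] fpA cA by simp
      finally obtain n where n: "n \<in> ?N" and eqn: "fp \<otimes>\<^bsub>?A\<^esub> r a = n \<otimes>\<^bsub>?A\<^esub> fp"
        unfolding r_coset_def by blast
      obtain b where b: "b \<in> ?C" and nb: "n = r b" using n Nr by blast
      have "compose ?C fp (r a) = compose ?C (r b) fp"
        using eqn mA multB[of fp "r a"] multB[of "r b" fp] fpB rA[OF a] rA[OF b] AB nb
        by (metis subsetD)
      note eqc = this
      have key: "fp (y \<otimes>\<^bsub>G\<^esub> a) = fp y \<otimes>\<^bsub>G\<^esub> b" if y: "y \<in> ?C" for y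
      proof -
        have "compose ?C fp (r a) y = compose ?C (r b) fp y" by (simp add: eqc)
        then show ?thesis using y a fpfun by (simp add: compose_eq r_def)
      qed
      have "fp a = b" using key[OF oneG] fp1 a b grp by simp
      then show "fp (x \<otimes>\<^bsub>G\<^esub> a) = fp x \<otimes>\<^bsub>G\<^esub> fp a" using key[OF x] by simp
    qed
    have fphom': "fp \<in> hom G G" unfolding hom_def using fpfun fphom by auto
    define T0 where "T0 = {\<sigma> g | \<sigma>. \<sigma> \<in> K}"
    have T0S: "T0 \<in> S" using assms(4) gG T0_def by (auto simp: Cyc_def)
    have gT0: "g \<in> T0" using Kone gG T0_def by force
    have "(\<one>\<^bsub>G\<^esub>, g \<otimes>\<^bsub>G\<^esub> \<one>\<^bsub>G\<^esub>) \<in> rel_of G T0"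
      unfolding rel_of_def using oneG gT0 by blast
    then have "(\<lambda>(a, b). (fp a, fp b)) (\<one>\<^bsub>G\<^esub>, g \<otimes>\<^bsub>G\<^esub> \<one>\<^bsub>G\<^esub>) \<in> (\<lambda>(a, b). (fp a, fp b)) ` rel_of G T0"
      by (rule imageI)
    moreover have "(\<lambda>(a, b). (fp a, fp b)) ` rel_of G T0 = rel_of G T0"
      using fpA T0S unfolding AutS_def by blast
    ultimately have "(fp \<one>\<^bsub>G\<^esub>, fp (g \<otimes>\<^bsub>G\<^esub> \<one>\<^bsub>G\<^esub>)) \<in> rel_of G T0" by simp
    then have "(\<one>\<^bsub>G\<^esub>, fp g) \<in> rel_of G T0" using fp1 gG grp by simp
    then obtain y where y: "y \<in> T0" and fpg: "fp g = y \<otimes>\<^bsub>G\<^esub> \<one>\<^bsub>G\<^esub>"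
      unfolding rel_of_def by blast
    obtain \<sigma> where s: "\<sigma> \<in> K" and ys: "y = \<sigma> g" using y T0_def by blast
    have "y \<in> ?C" using Kfun s gG ys by blast
    then have fpg': "\<sigma> g = fp g" using fpg ys grp by simp
    have agree: "\<And>x. x \<in> ?C \<Longrightarrow> \<sigma> x = fp x"
      using hom_agree_on_generate[of G \<sigma> fp g, OF grp _ fphom' gG fpg'] s Khom gen by blast
    have sig: "\<sigma> = fp"
    proof (rule extensionalityI)
      show "\<sigma> \<in> extensional ?C" using s KB Bij_imp_extensional by blast
      show "fp \<in> extensional ?C" using fpB Bij_imp_extensional by blast
      show "\<And>x. x \<in> ?C \<Longrightarrow> \<sigma> x = fp x" using agree .
    qed
    have "f = compose ?C (r h) \<sigma>"
    proof (rule extensionalityI)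
      show "f \<in> extensional ?C" using fB Bij_imp_extensional by blast
      show "compose ?C (r h) \<sigma> \<in> extensional ?C" by (simp add: compose_def)
      fix x assume x: "x \<in> ?C"
      have "compose ?C (r h) \<sigma> x = fp x \<otimes>\<^bsub>G\<^esub> h"
        using x sig fpfun by (simp add: compose_eq r_def)
      also have "\<dots> = f x" using fpx[OF x] ffun[OF x] hi_def h grp
        by (simp add: G.m_assoc)
      finally show "f x = compose ?C (r h) \<sigma> x" by simp
    qed
    then show "\<exists>h\<in>?C. \<exists>k\<in>K. f = compose ?C (r h) k" using h s by blast
  qed
  have eq1: "AutS G S = ?N <#>\<^bsub>?B\<^esub> K"
  proof
    show "AutS G S \<subseteq> ?N <#>\<^bsub>?B\<^esub> K"
    proof
      fix f assume "f \<in> AutS G S"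
      then obtain h k where h: "h \<in> ?C" and k: "k \<in> K" and f: "f = compose ?C (r h) k"
        using main by blast
      have "f = r h \<otimes>\<^bsub>?B\<^esub> k" using f multB[of "r h" k] rA[OF h] k KB AB by (metis subsetD)
      then show "f \<in> ?N <#>\<^bsub>?B\<^esub> K" unfolding set_mult_def using Nr h k by blast
    qed
  next
    show "?N <#>\<^bsub>?B\<^esub> K \<subseteq> AutS G S"
    proof
      fix f assume "f \<in> ?N <#>\<^bsub>?B\<^esub> K"
      then obtain n k where n: "n \<in> ?N" and k: "k \<in> K" and f: "f = n \<otimes>\<^bsub>?B\<^esub> k"
        unfolding set_mult_def by blast
      have "f = compose ?C n k" using f multB n k NA KA AB by blast
      then show "f \<in> AutS G S" using closeA n k NA KA by blast
    qed
  qed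
  have subK: "subgroup K ?A"
  proof (rule group.subgroupI[OF grpA])
    show "K \<subseteq> carrier ?A" using KA cA by simp
    show "K \<noteq> {}" using Kone by blast
    show "\<And>a b. a \<in> K \<Longrightarrow> b \<in> K \<Longrightarrow> a \<otimes>\<^bsub>?A\<^esub> b \<in> K"
      using subgroup.m_closed[OF assms(3)] mAu mA by simp
    show "\<And>a. a \<in> K \<Longrightarrow> inv\<^bsub>?A\<^esub> a \<in> K"
    proof -
      fix a assume a: "a \<in> K"
      have ai: "inv\<^bsub>AutoGroup G\<^esub> a \<in> K" using subgroup.m_inv_closed[OF assms(3) a] .
      have "inv\<^bsub>AutoGroup G\<^esub> a \<otimes>\<^bsub>AutoGroup G\<^esub> a = \<one>\<^bsub>AutoGroup G\<^esub>"
        using group.l_inv[OF grpAu] a Kauto cAu by auto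
      then have "inv\<^bsub>AutoGroup G\<^esub> a \<otimes>\<^bsub>?A\<^esub> a = \<one>\<^bsub>?A\<^esub>" using mA mAu oA oAu by simp
      then have "inv\<^bsub>?A\<^esub> a = inv\<^bsub>AutoGroup G\<^esub> a"
        using group.inv_equality[OF grpA] a ai KA cA by blast
      then show "inv\<^bsub>?A\<^esub> a \<in> K" using ai by simp
    qed
  qed
  have inter: "?N \<inter> K = {\<one>\<^bsub>?A\<^esub>}"
  proof
    show "{\<one>\<^bsub>?A\<^esub>} \<subseteq> ?N \<inter> K"
      using subgroup.one_closed[OF subN] oA oneB Kone by simp
    show "?N \<inter> K \<subseteq> {\<one>\<^bsub>?A\<^esub>}"
    proof
      fix n assume "n \<in> ?N \<inter> K"
      then obtain h where h: "h \<in> ?C" and n: "n = r h" and nK: "n \<in> K" using Nr by blast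
      have "n \<one>\<^bsub>G\<^esub> = \<one>\<^bsub>G\<^esub>"
        using Khom nK grp by (simp add: group_hom.hom_one group_hom_axioms_def group_hom_def subset_iff)
      moreover have "n \<one>\<^bsub>G\<^esub> = h" using n h grp by (simp add: r_def group.is_monoid monoid.one_closed)
      ultimately have "h = \<one>\<^bsub>G\<^esub>" by simp
      then have "n = (\<lambda>x\<in>?C. x)" using n grp by (auto simp: r_def group.is_monoid monoid.r_one)
      then show "n \<in> {\<one>\<^bsub>?A\<^esub>}" using oA oneB by simp
    qed
  qed
  have sm: "?N <#>\<^bsub>?A\<^esub> K = ?N <#>\<^bsub>?B\<^esub> K" unfolding set_mult_def using mA by simp
  show ?thesis
    using eq1 nrm subK inter sm cA unfolding is_semidirect_def by simp
qed

end
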